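(* Let $(G,c)$ be a metric TSP instance with $n\ge 3$ cities, let $T^*$ be a shortest tour and let $L=c(T^* )$. Then every 2-optimal tour $T'$ satisfies $$2\sum_{e\in E(T')} c(e)^2 \le L^2 .$$
   Context: A metric TSP instance with $n$ cities consists of a complete undirected graph $G$ on $n$ vertices together with $c: E(G)\to\mathbb{R}_{\ge 0}$ satisfying the triangle inequality $c(x,y)+c(y,z)\ge c(x,z)$. A tour is a cycle containing all vertices; its length is the sum of its edge lengths. Tours are regarded as oriented cycles. A tour is 2-optimal if for all pairs of edges $(a,b),(x,y)$ of the oriented tour, $c(a,x)+c(b,y)\ge c(a,b)+c(x,y)$. *)

theory Defs
  imports Complex_Main
begin

text \<open>A metric TSP instance on the vertex set V: costs on the edges of the complete
graph, i.e. on pairs of distinct vertices (diagonal values of c are irrelevant).\<close>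
definition metric_tsp :: "'a set \<Rightarrow> ('a \<Rightarrow> 'a \<Rightarrow> real) \<Rightarrow> bool" where
  "metric_tsp V c \<longleftrightarrow> finite V \<and>
     (\<forall>x\<in>V. \<forall>y\<in>V. x \<noteq> y \<longrightarrow> c x y \<ge> 0 \<and> c x y = c y x) \<and>
     (\<forall>x\<in>V. \<forall>y\<in>V. \<forall>z\<in>V. x \<noteq> y \<and> y \<noteq> z \<and> x \<noteq> z \<longrightarrow> c x y + c y z \<ge> c x z)"

text \<open>An oriented tour is a cyclic ordering of all vertices, given by a list listing
every vertex exactly once; its oriented edges are (t!i, t!((i+1) mod n)).\<close>
definition is_tour :: "'a set \<Rightarrow> 'a list \<Rightarrow> bool" where
  "is_tour V t \<longleftrightarrow> distinct t \<and> set t = V"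

definition tour_edge :: "'a list \<Rightarrow> nat \<Rightarrow> 'a \<times> 'a" where
  "tour_edge t i = (t ! i, t ! ((i + 1) mod length t))"

definition tour_length :: "('a \<Rightarrow> 'a \<Rightarrow> real) \<Rightarrow> 'a list \<Rightarrow> real" where
  "tour_length c t = (\<Sum>i<length t. c (fst (tour_edge t i)) (snd (tour_edge t i)))"

definition tour_sq_length :: "('a \<Rightarrow> 'a \<Rightarrow> real) \<Rightarrow> 'a list \<Rightarrow> real" where
  "tour_sq_length c t = (\<Sum>i<length t. (c (fst (tour_edge t i)) (snd (tour_edge t i)))^2)"

definition two_optimal :: "('a \<Rightarrow> 'a \<Rightarrow> real) \<Rightarrow> 'a list \<Rightarrow> bool" where
  "two_optimal c t \<longleftrightarrow>
     (\<forall>i<length t. \<forall>j<length t. i \<noteq> j \<longrightarrow>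
        (let (a, b) = tour_edge t i; (x, y) = tour_edge t j
         in c a x + c b y \<ge> c a b + c x y))"

end

theory Submission
  imports Defs "HOL-Analysis.Analysis"
begin


definition tnt :: "real \<Rightarrow> real \<Rightarrow> real" where "tnt l x = max 0 (l - \<bar>x\<bar>)"
definition Psi :: "real \<Rightarrow> real \<Rightarrow> real" where
  "Psi l x = (let y = max (-l) (min l x) in l^2/2 + l*y - y*\<bar>y\<bar>/2)"

lemma Psi_lo: "l \<ge> 0 \<Longrightarrow> x \<le> -l \<Longrightarrow> Psi l x = 0"
  by (cases "x = -l") (auto simp add: Psi_def Let_def max_def min_def power2_eq_square)
lemma Psi_hi: "l \<ge> 0 \<Longrightarrow> x \<ge> l \<Longrightarrow> Psi l x = l^2"
  by (simp add: Psi_def Let_def max_def min_def power2_eq_square)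

lemma Psi_cont: "continuous_on S (Psi l)"
  unfolding Psi_def Let_def by (auto intro!: continuous_intros)

lemma Psi_deriv:
  assumes l: "l \<ge> 0" and x: "x \<noteq> -l" "x \<noteq> 0" "x \<noteq> l"
  shows "(Psi l has_real_derivative tnt l x) (at x)"
proof -
  consider "x < -l" | "-l < x \<and> x < 0" | "0 < x \<and> x < l" | "l < x" using x l by linarith
  then show ?thesis
  proof cases
    case 1
    have e: "tnt l x = 0" using 1 by (simp add: tnt_def)
    have "(Psi l has_real_derivative 0) (at x)"
      apply (rule has_field_derivative_transform_within_open[of "\<lambda>x. 0" 0 x "{..<-l}"])
      using 1 l by (auto simp: Psi_lo)
    then show ?thesis using e by simp
  next
    case 2
    have d: "((\<lambda>z. (z + l)^2/2) has_real_derivative (x + l)) (at x)"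
      by (auto intro!: derivative_eq_intros)
    have e: "tnt l x = x + l" using 2 by (simp add: tnt_def)
    have "(Psi l has_real_derivative (x + l)) (at x)"
      apply (rule has_field_derivative_transform_within_open[OF d, where S="{-l<..<0}"])
      using 2 l by (auto simp: Psi_def Let_def max_def min_def power2_eq_square algebra_simps)
    then show ?thesis using e by simp
  next
    case 3
    have d: "((\<lambda>z. l^2 - (l - z)^2/2) has_real_derivative (l - x)) (at x)"
      by (auto intro!: derivative_eq_intros simp: field_simps)
    have e: "tnt l x = l - x" using 3 by (simp add: tnt_def)
    have "(Psi l has_real_derivative (l - x)) (at x)"
      apply (rule has_field_derivative_transform_within_open[OF d, where S="{0<..<l}"])
      using 3 l by (auto simp: Psi_def Let_def max_def min_def power2_eq_square field_simps)
    then show ?thesis using e by simp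
  next
    case 4
    have e: "tnt l x = 0" using 4 by (simp add: tnt_def)
    have "(Psi l has_real_derivative 0) (at x)"
      apply (rule has_field_derivative_transform_within_open[of "\<lambda>x. l^2" 0 x "{l<..}"])
      using 4 l by (auto simp: Psi_hi)
    then show ?thesis using e by simp
  qed
qed

definition dc :: "real \<Rightarrow> real \<Rightarrow> real \<Rightarrow> real" where
  "dc L x y = min \<bar>x - y\<bar> (L - \<bar>x - y\<bar>)"

lemma Psi_shift_deriv:
  assumes "l \<ge> 0" "s + a \<noteq> -l" "s + a \<noteq> 0" "s + a \<noteq> l"
  shows "((\<lambda>s. Psi l (s + a)) has_real_derivative tnt l (s + a)) (at s)"
  using DERIV_chain2[OF Psi_deriv[OF assms] DERIV_add[OF DERIV_ident DERIV_const[of a]]] by simp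

lemma tent_split:
  assumes "0 \<le> l" "2*l \<le> L" "0 \<le> p" "p \<le> L" "0 \<le> s" "s \<le> L"
  shows "max 0 (l - dc L s p) = tnt l (s + (-p)) + tnt l (s + (L - p)) + tnt l (s + (-p-L))"
  using assms unfolding tnt_def dc_def by (auto simp: abs_if max_def min_def)

lemma tent_int:
  assumes l: "0 \<le> l" "2*l \<le> L" and p: "0 \<le> p" "p \<le> L"
  shows "((\<lambda>s. max 0 (l - dc L s p)) has_integral l^2) {0..L}"
proof -
  define \<Phi> where "\<Phi> s = Psi l (s + (-p)) + Psi l (s + (L - p)) + Psi l (s + (-p-L))" for s
  define S where "S = {p-l,p,p+l, p-L-l, p-L, p-L+l, p+L-l, p+L, p+L+l}"
  have fin: "finite S" unfolding S_def by simp
  have der: "(\<Phi> has_vector_derivative (tnt l (s + (-p)) + tnt l (s + (L - p)) + tnt l (s + (-p-L)))) (at s)"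
    if "s \<in> {0<..<L} - S" for s
    unfolding has_real_derivative_iff_has_vector_derivative[symmetric] \<Phi>_def
    apply (intro DERIV_add Psi_shift_deriv)
    using that l unfolding S_def by auto
  have cont: "continuous_on {0..L} \<Phi>"
    unfolding \<Phi>_def by (intro continuous_intros continuous_on_compose2[OF Psi_cont[of UNIV l]]) auto
  have L0: "0 \<le> L" using l by simp
  have "((\<lambda>s. tnt l (s + (-p)) + tnt l (s + (L - p)) + tnt l (s + (-p-L))) has_integral (\<Phi> L - \<Phi> 0)) {0..L}"
    by (rule fundamental_theorem_of_calculus_interior_strong[OF fin L0 der cont])
  moreover have "\<Phi> L - \<Phi> 0 = l^2"
    unfolding \<Phi>_def using l p by (simp add: Psi_lo Psi_hi)
  ultimately have "((\<lambda>s. tnt l (s + (-p)) + tnt l (s + (L - p)) + tnt l (s + (-p-L))) has_integral l^2) {0..L}"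
    by simp
  then show ?thesis
    by (rule has_integral_eq[rotated]) (use tent_split[OF l p] in auto)
qed



lemma pack_line:
  fixes y \<rho> :: "'i \<Rightarrow> real"
  assumes "finite A" "A \<noteq> {}" "\<forall>i\<in>A. \<forall>j\<in>A. i \<noteq> j \<longrightarrow> \<rho> i + \<rho> j \<le> \<bar>y i - y j\<bar>"
  shows "\<exists>i0\<in>A. \<exists>i1\<in>A. (\<forall>k\<in>A. y i0 \<le> y k \<and> y k \<le> y i1) \<and>
           2 * (\<Sum>k\<in>A. \<rho> k) \<le> \<rho> i0 + \<rho> i1 + (y i1 - y i0)"
  using assms
proof (induction "card A" arbitrary: A rule: less_induct)
  case less
  have fi: "finite (y ` A)" "y ` A \<noteq> {}" using less.prems(1,2) by auto
  obtain m where m1: "m \<in> A" "y m = Max (y ` A)"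
    using Max_in[OF fi] by auto
  have m: "m \<in> A" "\<forall>k\<in>A. y k \<le> y m"
    using m1 Max_ge[OF fi(1)] by auto
  show ?case
  proof (cases "A = {m}")
    case True
    then show ?thesis by auto
  next
    case False
    define A' where "A' = A - {m}"
    have A': "finite A'" "A' \<noteq> {}" "card A' < card A"
    proof -
      show "finite A'" using less.prems(1) unfolding A'_def by simp
      show "A' \<noteq> {}" using m(1) False unfolding A'_def by auto
      show "card A' < card A" using card_Diff1_less[OF less.prems(1) m(1)] unfolding A'_def .
    qed
    have pw: "\<forall>i\<in>A'. \<forall>j\<in>A'. i \<noteq> j \<longrightarrow> \<rho> i + \<rho> j \<le> \<bar>y i - y j\<bar>"
      using less.prems(3) unfolding A'_def by auto
    obtain i0 i1 where i: "i0 \<in> A'" "i1 \<in> A'" "\<forall>k\<in>A'. y i0 \<le> y k \<and> y k \<le> y i1"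
      "2 * (\<Sum>k\<in>A'. \<rho> k) \<le> \<rho> i0 + \<rho> i1 + (y i1 - y i0)"
      using less.hyps[OF A'(3) A'(1,2) pw] by (elim bexE conjE) (rule that)
    have "i1 \<noteq> m" "i1 \<in> A" "i0 \<in> A" using i unfolding A'_def by auto
    then have r: "\<rho> i1 + \<rho> m \<le> \<bar>y i1 - y m\<bar>" using less.prems(3) m(1) by blast
    have "y i1 \<le> y m" using m \<open>i1 \<in> A\<close> by auto
    have sum: "(\<Sum>k\<in>A. \<rho> k) = \<rho> m + (\<Sum>k\<in>A'. \<rho> k)"
      unfolding A'_def using less.prems(1) m(1) by (simp add: sum.remove)
    show ?thesis
    proof (intro bexI conjI)
      show "\<forall>k\<in>A. y i0 \<le> y k \<and> y k \<le> y m"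
      proof
        fix k assume k: "k \<in> A"
        have "y i0 \<le> y i1" using i(3) i(2) by blast
        show "y i0 \<le> y k \<and> y k \<le> y m"
        proof (cases "k = m")
          case True then show ?thesis using \<open>y i0 \<le> y i1\<close> \<open>y i1 \<le> y m\<close> by simp
        next
          case False then show ?thesis using i(3) k m(2) unfolding A'_def by blast
        qed
      qed
      show "2 * (\<Sum>k\<in>A. \<rho> k) \<le> \<rho> i0 + \<rho> m + (y m - y i0)"
        using sum i(4) r \<open>y i1 \<le> y m\<close> by linarith
    qed (use \<open>i0 \<in> A\<close> m in auto)
  qed
qed

lemma pack_circle:
  fixes y \<rho> :: "'i \<Rightarrow> real"
  assumes fin: "finite I" and L: "0 \<le> L" and nn: "\<forall>i\<in>I. 0 \<le> \<rho> i" and half: "\<forall>i\<in>I. 2 * \<rho> i \<le> L"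
    and pw: "\<forall>i\<in>I. \<forall>j\<in>I. i \<noteq> j \<longrightarrow> 0 < \<rho> i \<longrightarrow> 0 < \<rho> j \<longrightarrow>
                \<rho> i + \<rho> j \<le> min \<bar>y i - y j\<bar> (L - \<bar>y i - y j\<bar>)"
  shows "2 * (\<Sum>i\<in>I. \<rho> i) \<le> L"
proof -
  define A where "A = {i\<in>I. 0 < \<rho> i}"
  have finA: "finite A" using fin unfolding A_def by simp
  have sumA: "(\<Sum>i\<in>I. \<rho> i) = (\<Sum>i\<in>A. \<rho> i)"
    unfolding A_def using fin nn by (intro sum.mono_neutral_right) auto
  have pwA: "\<forall>i\<in>A. \<forall>j\<in>A. i \<noteq> j \<longrightarrow> \<rho> i + \<rho> j \<le> min \<bar>y i - y j\<bar> (L - \<bar>y i - y j\<bar>)"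
    using pw unfolding A_def by auto
  consider "A = {}" | i where "A = {i}" | "card A \<ge> 2"
  proof -
    have "card A = 0 \<or> card A = 1 \<or> card A \<ge> 2" by arith
    moreover have "card A = 0 \<Longrightarrow> A = {}" using finA by simp
    moreover have "card A = 1 \<Longrightarrow> \<exists>i. A = {i}" by (simp add: card_1_singleton_iff)
    ultimately show "(A = {} \<Longrightarrow> thesis) \<Longrightarrow> (\<And>i. A = {i} \<Longrightarrow> thesis) \<Longrightarrow> (2 \<le> card A \<Longrightarrow> thesis) \<Longrightarrow> thesis" by blast
  qed
  then show ?thesis
  proof cases
    case 1 then show ?thesis using sumA L by simp
  next
    case (2 i)
    then have "i \<in> A" by simp
    then have "i \<in> I" unfolding A_def by simp
    then show ?thesis using sumA half 2 by simp
  next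
    case 3
    then have ne: "A \<noteq> {}" by auto
    have pwA': "\<forall>i\<in>A. \<forall>j\<in>A. i \<noteq> j \<longrightarrow> \<rho> i + \<rho> j \<le> \<bar>y i - y j\<bar>"
      using pwA by simp
    obtain i0 i1 where i: "i0 \<in> A" "i1 \<in> A" "\<forall>k\<in>A. y i0 \<le> y k \<and> y k \<le> y i1"
      "2 * (\<Sum>k\<in>A. \<rho> k) \<le> \<rho> i0 + \<rho> i1 + (y i1 - y i0)"
      using pack_line[OF finA ne pwA'] by (elim bexE conjE) (rule that)
    have "i0 \<noteq> i1"
    proof
      assume e: "i0 = i1"
      obtain k where k: "k \<in> A" "k \<noteq> i0"
      proof -
        have "\<not> A \<subseteq> {i0}" using 3 card_mono[of "{i0}" A] by auto
        then show ?thesis using that by blast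
      qed
      then have "y k = y i0" using i(3) e by force
      moreover have "\<rho> k + \<rho> i0 \<le> min \<bar>y k - y i0\<bar> (L - \<bar>y k - y i0\<bar>)" using pwA k i(1) by blast
      then have "\<rho> k + \<rho> i0 \<le> \<bar>y k - y i0\<bar>" by simp
      moreover have "0 < \<rho> k" "0 < \<rho> i0" using k i(1) unfolding A_def by auto
      ultimately show False by simp
    qed
    then have "\<rho> i0 + \<rho> i1 \<le> min \<bar>y i0 - y i1\<bar> (L - \<bar>y i0 - y i1\<bar>)" using pwA i(1,2) by blast
    then have "\<rho> i0 + \<rho> i1 \<le> L - \<bar>y i0 - y i1\<bar>" by simp
    moreover have "y i0 \<le> y i1" using i by auto
    ultimately show ?thesis using sumA i(4) by linarith
  qed
qed



lemma dnth: "distinct t \<Longrightarrow> i < length t \<Longrightarrow> j < length t \<Longrightarrow> i \<noteq> j \<Longrightarrow> t!i \<noteq> t!j"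
  by (simp add: nth_eq_iff_index_eq)

lemma tri:
  assumes "metric_tsp V c" "x \<in> V" "y \<in> V" "z \<in> V" "x \<noteq> y" "y \<noteq> z" "x \<noteq> z"
  shows "c x z \<le> c x y + c y z"
  using assms unfolding metric_tsp_def by blast

lemma symm:
  assumes "metric_tsp V c" "x \<in> V" "y \<in> V" "x \<noteq> y"
  shows "c x y = c y x"
  using assms unfolding metric_tsp_def by blast

lemma nonneg:
  assumes "metric_tsp V c" "x \<in> V" "y \<in> V" "x \<noteq> y"
  shows "0 \<le> c x y"
  using assms unfolding metric_tsp_def by blast

lemma path_fwd:
  assumes M: "metric_tsp V c" and t: "distinct t" "set t = V" and km: "k < m" "m < length t"
  shows "c (t!k) (t!m) \<le> (\<Sum>q\<in>{k..<m}. c (t!q) (t!(Suc q mod length t)))"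
  using km
proof (induction m)
  case 0 then show ?case by simp
next
  case (Suc m)
  have sm: "Suc m mod length t = Suc m" using Suc.prems by simp
  show ?case
  proof (cases "k = m")
    case True
    then show ?thesis using sm by simp
  next
    case False
    then have km': "k < m" using Suc.prems by simp
    have IH: "c (t!k) (t!m) \<le> (\<Sum>q\<in>{k..<m}. c (t!q) (t!(Suc q mod length t)))"
      using Suc.IH km' Suc.prems by simp
    have d: "t!k \<noteq> t!m" "t!m \<noteq> t!Suc m" "t!k \<noteq> t!Suc m"
      using km' Suc.prems by (simp_all add: dnth[OF t(1)])
    have inV: "t!k \<in> V" "t!m \<in> V" "t!Suc m \<in> V" using t(2) km' Suc.prems by auto
    have "c (t!k) (t!Suc m) \<le> c (t!k) (t!m) + c (t!m) (t!Suc m)"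
      by (rule tri[OF M inV d])
    also have "\<dots> \<le> (\<Sum>q\<in>{k..<m}. c (t!q) (t!(Suc q mod length t))) + c (t!m) (t!(Suc m mod length t))"
      using IH sm by simp
    also have "\<dots> = (\<Sum>q\<in>{k..<Suc m}. c (t!q) (t!(Suc q mod length t)))"
      using km' by simp
    finally show ?thesis .
  qed
qed

lemma path_back:
  assumes M: "metric_tsp V c" and t: "distinct t" "set t = V" and m: "1 \<le> m" "m < length t"
  shows "c (t!m) (t!0) \<le> (\<Sum>q\<in>{m..<length t}. c (t!q) (t!(Suc q mod length t)))"
proof -
  let ?n = "length t"
  have "m \<le> ?n - 1" using m by simp
  then show ?thesis using m
  proof (induction m rule: inc_induct)
    case base
    have "Suc (?n - 1) = ?n" using base by simp
    then have e: "Suc (?n - 1) mod ?n = 0" by simp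
    have "{?n - 1..<?n} = {?n - 1}" using base by auto
    then show ?case using e by simp
  next
    case (step j)
    have sj: "Suc j mod ?n = Suc j" using step by simp
    have IH: "c (t!Suc j) (t!0) \<le> (\<Sum>q\<in>{Suc j..<?n}. c (t!q) (t!(Suc q mod ?n)))"
      using step by simp
    have lt: "Suc j < ?n" "1 \<le> j" "0 < ?n" "j \<noteq> 0" "Suc j \<noteq> 0" "j < ?n" using step by auto
    have d: "t!j \<noteq> t!Suc j" "t!Suc j \<noteq> t!0" "t!j \<noteq> t!0"
      using lt by (simp_all add: dnth[OF t(1)])
    have inV: "t!j \<in> V" "t!Suc j \<in> V" "t!0 \<in> V" using t(2) lt by auto
    have "c (t!j) (t!0) \<le> c (t!j) (t!Suc j) + c (t!Suc j) (t!0)"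
      by (rule tri[OF M inV d])
    also have "\<dots> \<le> c (t!j) (t!(Suc j mod ?n)) + (\<Sum>q\<in>{Suc j..<?n}. c (t!q) (t!(Suc q mod ?n)))"
      using IH sj by simp
    also have "\<dots> = (\<Sum>q\<in>{j..<?n}. c (t!q) (t!(Suc q mod ?n)))"
      using step by (simp add: sum.atLeast_Suc_lessThan)
    finally show ?case .
  qed
qed


lemma dc_tri: "0 \<le> x \<Longrightarrow> x \<le> L \<Longrightarrow> 0 \<le> y \<Longrightarrow> y \<le> L \<Longrightarrow> 0 \<le> z \<Longrightarrow> z \<le> L \<Longrightarrow>
   dc L x z \<le> dc L y x + dc L y z"
  unfolding dc_def by (simp add: min_def abs_if)
lemma dc_nn: "0 \<le> x \<Longrightarrow> x \<le> L \<Longrightarrow> 0 \<le> y \<Longrightarrow> y \<le> L \<Longrightarrow> 0 \<le> dc L x y"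
  unfolding dc_def by (simp add: min_def abs_if)
lemma dc_half: "2 * dc L x y \<le> L"
  unfolding dc_def by (simp add: min_def)

lemma suc_mod_if: "k < n \<Longrightarrow> Suc k mod n = (if Suc k < n then Suc k else 0)"
proof (cases "Suc k < n")
  case False
  assume "k < n"
  then have "Suc k = n" using False by simp
  then show ?thesis by simp
qed simp

lemma suc_mod_ne: "2 \<le> n \<Longrightarrow> k < n \<Longrightarrow> Suc k mod n \<noteq> k"
  by (auto simp: suc_mod_if)

lemma suc_mod_inj: "i < n \<Longrightarrow> j < n \<Longrightarrow> Suc i mod n = Suc j mod n \<Longrightarrow> i = j"
  by (auto simp: suc_mod_if split: if_splits)

theorem mainTheorem4:
  fixes V :: "'a set" and c :: "'a \<Rightarrow> 'a \<Rightarrow> real" and Tstar T' :: "'a list"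
  assumes "metric_tsp V c"
    and "card V \<ge> 3"
    and "is_tour V Tstar"
    and "\<forall>T. is_tour V T \<longrightarrow> tour_length c Tstar \<le> tour_length c T"
    and "is_tour V T'"
    and "two_optimal c T'"
  shows "2 * tour_sq_length c T' \<le> (tour_length c Tstar)^2"
proof -
  note M = assms(1)
  have tD: "distinct Tstar" "set Tstar = V" using assms(3) unfolding is_tour_def by auto
  have uD: "distinct T'" "set T'= V" using assms(5) unfolding is_tour_def by auto
  define n where "n = length Tstar"
  have nV: "n = card V" unfolding n_def using tD by (metis distinct_card)
  have un: "length T' = n" unfolding nV using uD by (metis distinct_card)
  have n3: "3 \<le> n" using assms(2) nV by simp
  define g where "g k = c (Tstar!k) (Tstar!(Suc k mod n))" for k
  define pos where "pos k = (\<Sum>q<k. g q)" for k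
  define L where "L = tour_length c Tstar"
  have L_eq: "L = pos n" unfolding L_def tour_length_def tour_edge_def pos_def g_def n_def by simp
  have g0: "0 \<le> g k" if "k < n" for k
  proof -
    have "Suc k mod n < n" using that by simp
    moreover have "Suc k mod n \<noteq> k" using suc_mod_ne[of n k] n3 that by simp
    ultimately have "Tstar!k \<noteq> Tstar!(Suc k mod n)" using dnth[OF tD(1)] that unfolding n_def by metis
    moreover have "Tstar!k \<in> V" "Tstar!(Suc k mod n) \<in> V"
      using tD(2) that \<open>Suc k mod n < n\<close> unfolding n_def by auto
    ultimately show ?thesis unfolding g_def using nonneg[OF M] by blast
  qed
  have pos_diff: "pos m - pos k = (\<Sum>q\<in>{k..<m}. g q)" if "k \<le> m" for k m
  proof -
    have "(\<Sum>q\<in>{0..<k}. g q) + (\<Sum>q\<in>{k..<m}. g q) = (\<Sum>q\<in>{0..<m}. g q)"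
      using that by (intro sum.atLeastLessThan_concat) auto
    then show ?thesis unfolding pos_def by (simp add: atLeast0LessThan)
  qed
  have pos_mono: "pos k \<le> pos m" if "k \<le> m" "m \<le> n" for k m
  proof -
    have "0 \<le> (\<Sum>q\<in>{k..<m}. g q)" using that g0 by (intro sum_nonneg) auto
    then show ?thesis using pos_diff[OF that(1)] by simp
  qed
  have pos0: "pos 0 = 0" unfolding pos_def by simp
  have cdist: "c (Tstar!k) (Tstar!m) \<le> pos m - pos k \<and> c (Tstar!k) (Tstar!m) \<le> L - (pos m - pos k)"
    if km: "k < m" "m < n" for k m
  proof
    show "c (Tstar!k) (Tstar!m) \<le> pos m - pos k"
      using path_fwd[OF M tD km(1)] km unfolding pos_diff[OF less_imp_le[OF km(1)]] g_def n_def by simp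
  next
    have inV: "Tstar!k \<in> V" "Tstar!m \<in> V" "Tstar!0 \<in> V" using km unfolding n_def tD(2)[symmetric] by (auto intro!: nth_mem)
    have ne: "Tstar!k \<noteq> Tstar!m" using dnth[OF tD(1)] km unfolding n_def by simp
    have bck: "c (Tstar!m) (Tstar!0) \<le> L - pos m"
    proof -
      have "c (Tstar!m) (Tstar!0) \<le> (\<Sum>q\<in>{m..<n}. g q)"
        using path_back[OF M tD, of m] km unfolding g_def n_def by simp
      also have "\<dots> = L - pos m" using pos_diff[of m n] km L_eq by simp
      finally show ?thesis .
    qed
    have "c (Tstar!k) (Tstar!m) = c (Tstar!m) (Tstar!k)" using symm[OF M inV(1,2) ne] .
    also have "\<dots> \<le> L - (pos m - pos k)"
    proof (cases "k = 0")
      case True then show ?thesis using bck pos0 by simp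
    next
      case False
      have ne2a: "Tstar!m \<noteq> Tstar!0"
        by (rule dnth[OF tD(1)]) (use km False in \<open>auto simp: n_def\<close>)
      have ne2b: "Tstar!0 \<noteq> Tstar!k"
        by (rule dnth[OF tD(1)]) (use km False in \<open>auto simp: n_def\<close>)
      note ne2 = ne2a ne2b
      have "c (Tstar!m) (Tstar!k) \<le> c (Tstar!m) (Tstar!0) + c (Tstar!0) (Tstar!k)"
        by (rule tri[OF M inV(2,3,1) ne2 ne[symmetric]])
      moreover have "c (Tstar!0) (Tstar!k) \<le> pos k - pos 0"
        using path_fwd[OF M tD, of 0 k] False km unfolding pos_diff[OF le0] g_def n_def by simp
      ultimately show ?thesis using bck pos0 by simp
    qed
    finally show "c (Tstar!k) (Tstar!m) \<le> L - (pos m - pos k)" .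
  qed
  define idx where "idx v = (SOME k. k < n \<and> Tstar!k = v)" for v
  have idx: "idx v < n \<and> Tstar!(idx v) = v" if "v \<in> V" for v
  proof -
    have "\<exists>k. k < n \<and> Tstar!k = v" using that tD(2) unfolding n_def by (auto simp: in_set_conv_nth)
    then show ?thesis unfolding idx_def by (rule someI_ex)
  qed
  define P where "P v = pos (idx v)" for v
  have L0: "0 \<le> L" using pos_mono[of 0 n] pos0 L_eq by simp
  have Pr: "0 \<le> P v \<and> P v \<le> L" if "v \<in> V" for v
    using pos_mono[of 0 "idx v"] pos_mono[of "idx v" n] idx[OF that] pos0 L_eq unfolding P_def by simp
  have cP: "c v w \<le> dc L (P v) (P w)" if vw: "v \<in> V" "w \<in> V" "v \<noteq> w" for v w
  proof -
    define k where "k = idx v"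
    define m where "m = idx w"
    have k: "k < n" "Tstar!k = v" using idx[OF vw(1)] unfolding k_def by auto
    have m: "m < n" "Tstar!m = w" using idx[OF vw(2)] unfolding m_def by auto
    have "k \<noteq> m" using k m vw by auto
    then consider "k < m" | "m < k" by linarith
    then show ?thesis
    proof cases
      case 1
      have "\<bar>P v - P w\<bar> = pos m - pos k" using pos_mono[of k m] 1 m unfolding P_def k_def m_def by simp
      then show ?thesis using cdist[OF 1 m(1)] k m unfolding dc_def by simp
    next
      case 2
      have "\<bar>P v - P w\<bar> = pos k - pos m" using pos_mono[of m k] 2 k unfolding P_def k_def m_def by simp
      moreover have "c v w = c w v" using symm[OF M vw] .
      ultimately show ?thesis using cdist[OF 2 k(1)] k m unfolding dc_def by simp
    qed
  qed
  define a where "a i = T'!i" for i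
  define b where "b i = T'!(Suc i mod n)" for i
  define l where "l i = c (a i) (b i)" for i
  have abV: "a i \<in> V" "b i \<in> V" if "i < n" for i
  proof -
    have "Suc i mod n < n" using that by simp
    then show "a i \<in> V" "b i \<in> V" using that un unfolding a_def b_def uD(2)[symmetric] by (auto intro!: nth_mem)
  qed
  have ab_ne: "a i \<noteq> b i" if "i < n" for i
    using dnth[OF uD(1)] suc_mod_ne[of n i] n3 that un unfolding a_def b_def by simp
  have a_ne: "a i \<noteq> a j" if "i < n" "j < n" "i \<noteq> j" for i j
    using dnth[OF uD(1)] that un unfolding a_def by simp
  have b_ne: "b i \<noteq> b j" if "i < n" "j < n" "i \<noteq> j" for i j
    unfolding b_def
    by (rule dnth[OF uD(1)]) (use that un suc_mod_inj[of i n j] in auto)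
  have l0: "0 \<le> l i" if "i < n" for i
    using nonneg[OF M abV[OF that] ab_ne[OF that]] unfolding l_def .
  have lL: "2 * l i \<le> L" if "i < n" for i
    using cP[OF abV[OF that] ab_ne[OF that]] dc_half[of L "P (a i)" "P (b i)"] unfolding l_def by linarith
  have opt2: "l i + l j \<le> c (a i) (a j) + c (b i) (b j)" if "i < n" "j < n" "i \<noteq> j" for i j
  proof -
    have "(let (a, b) = tour_edge T' i; (x, y) = tour_edge T' j in c a x + c b y \<ge> c a b + c x y)"
      using assms(6) that un unfolding two_optimal_def by blast
    then show ?thesis unfolding tour_edge_def l_def a_def b_def Let_def un by simp
  qed
  have pointwise: "(\<Sum>i<n. 2 * max 0 (l i - dc L s (P (a i)))) \<le> L" if s: "0 \<le> s" "s \<le> L" for s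
  proof -
    define \<rho> where "\<rho> i = max 0 (l i - dc L s (P (a i)))" for i
    have "2 * (\<Sum>i\<in>{..<n}. \<rho> i) \<le> L"
    proof (rule pack_circle[where y = "\<lambda>i. P (b i)"])
      show "finite {..<n}" by simp
      show "0 \<le> L" by (rule L0)
      show "\<forall>i\<in>{..<n}. 0 \<le> \<rho> i" unfolding \<rho>_def by simp
      show "\<forall>i\<in>{..<n}. 2 * \<rho> i \<le> L"
      proof
        fix i assume "i \<in> {..<n}"
        then have i: "i < n" by simp
        have "0 \<le> dc L s (P (a i))" using dc_nn s Pr[OF abV(1)[OF i]] by blast
        then show "2 * \<rho> i \<le> L" using lL[OF i] L0 unfolding \<rho>_def by (simp add: max_def)
      qed
      show "\<forall>i\<in>{..<n}. \<forall>j\<in>{..<n}. i \<noteq> j \<longrightarrow> 0 < \<rho> i \<longrightarrow> 0 < \<rho> j \<longrightarrow>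
          \<rho> i + \<rho> j \<le> min \<bar>P (b i) - P (b j)\<bar> (L - \<bar>P (b i) - P (b j)\<bar>)"
      proof (intro ballI impI)
        fix i j assume "i \<in> {..<n}" "j \<in> {..<n}" "i \<noteq> j" "0 < \<rho> i" "0 < \<rho> j"
        then have ij: "i < n" "j < n" "i \<noteq> j" and r: "0 < \<rho> i" "0 < \<rho> j" by auto
        have ri: "\<rho> i = l i - dc L s (P (a i))" "\<rho> j = l j - dc L s (P (a j))"
          using r unfolding \<rho>_def by auto
        have t1: "dc L (P (a i)) (P (a j)) \<le> dc L s (P (a i)) + dc L s (P (a j))"
          using dc_tri[of "P (a i)" L s "P (a j)"] s Pr[OF abV(1)[OF ij(1)]] Pr[OF abV(1)[OF ij(2)]] by simp
        have t2: "c (a i) (a j) \<le> dc L (P (a i)) (P (a j))"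
          using cP[OF abV(1)[OF ij(1)] abV(1)[OF ij(2)] a_ne[OF ij]] .
        have t3: "c (b i) (b j) \<le> dc L (P (b i)) (P (b j))"
          using cP[OF abV(2)[OF ij(1)] abV(2)[OF ij(2)] b_ne[OF ij]] .
        show "\<rho> i + \<rho> j \<le> min \<bar>P (b i) - P (b j)\<bar> (L - \<bar>P (b i) - P (b j)\<bar>)"
          using ri t1 t2 t3 opt2[OF ij] unfolding dc_def[of L "P (b i)"] by linarith
      qed
    qed
    then show ?thesis unfolding \<rho>_def by (simp add: sum_distrib_left)
  qed
  have int1: "((\<lambda>s. 2 * max 0 (l i - dc L s (P (a i)))) has_integral (2 * (l i)^2)) {0..L}" if "i < n" for i
    using has_integral_mult_right[OF tent_int[OF l0[OF that] lL[OF that] conjunct1[OF Pr[OF abV(1)[OF that]]]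
          conjunct2[OF Pr[OF abV(1)[OF that]]]], of 2] .
  have intS: "((\<lambda>s. \<Sum>i<n. 2 * max 0 (l i - dc L s (P (a i)))) has_integral (\<Sum>i<n. 2 * (l i)^2)) {0..L}"
    by (rule has_integral_sum) (use int1 in auto)
  have intC: "((\<lambda>s. L) has_integral (L * L)) {0..L}"
    using has_integral_const_real[of L 0 L] L0 by simp
  have "(\<Sum>i<n. 2 * (l i)^2) \<le> L * L"
    by (rule has_integral_le[OF intS intC]) (use pointwise in auto)
  moreover have "tour_sq_length c T' = (\<Sum>i<n. (l i)^2)"
    unfolding tour_sq_length_def tour_edge_def l_def a_def b_def un by simp
  ultimately show ?thesis unfolding L_def[symmetric] by (simp add: sum_distrib_left power2_eq_square)
qed


end
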